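(* Let $G$ be a 3-connected graph, $d\ge 3$, and let $G''$ be the $G_d^0$-blocked graph of $G$. If $G''$ is the overlap graph of a family of subtrees of a tree $T$ that has exactly $k=d$ leaves and has no node whose degree is greater than two but less than $d$, then $G$ is $k$-colourable.
   Context: Two sets $a,b$ overlap if $a\cap b\neq\emptyset$, $a\setminus b\neq\emptyset$, $b\setminus a\neq\emptyset$; the overlap graph of a family of subtrees (nonempty connected node sets) of a tree has one vertex per subtree, adjacent iff the subtrees overlap. $G_d^0$ ($d\ge3$): vertices $v_s,v_b$ joined by $d$ internally disjoint three-vertex paths $v_s-x_i-v_b$, no other edges. The $G_d^0$-blocked graph $G''$ of $G$: let $G'=(V',E')$ be the disjoint union of six copies of $G$. The vertex set of $G''$ is $V_1\cup V_2\cup V_3\cup V_4$ (pairwise disjoint), where $V_1=V'$, $V_2$ contains one new vertex for each edge of $E'$ (edge-representatives), $V_3=\{f(v): v\in V_1\}$ is a set of new vertices in bijection $f$ with $V_1$, and $V_4$ is the vertex set of a copy of $G_d^0$. Edges of $G''$: $v\in V_1$ is adjacent to the edge-representative of $e\in E'$ iff $v$ is an endpoint of $e$; $V_2\cup V_3$ is a clique; each $v\in V_1$ is adjacent to $f(v)$; every vertex of $V_2\cup V_3$ is adjacent to $v_s$ and $v_b$; the edges of $G_d^0$; no other edges. *)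

theory Defs
  imports Main
begin

definition simple_graph :: "'a set \<Rightarrow> 'a set set \<Rightarrow> bool" where
  "simple_graph V E \<longleftrightarrow> finite V \<and>
     (\<forall>e\<in>E. \<exists>u v. e = {u, v} \<and> u \<noteq> v \<and> u \<in> V \<and> v \<in> V)"

definition adj_rel :: "'a set \<Rightarrow> 'a set set \<Rightarrow> ('a \<times> 'a) set" where
  "adj_rel V E = {(x, y). {x, y} \<in> E \<and> x \<in> V \<and> y \<in> V}"

definition connected_graph :: "'a set \<Rightarrow> 'a set set \<Rightarrow> bool" where
  "connected_graph V E \<longleftrightarrow> V \<noteq> {} \<and> (\<forall>u\<in>V. \<forall>v\<in>V. (u, v) \<in> (adj_rel V E)\<^sup>*)"

definition k_connected :: "nat \<Rightarrow> 'a set \<Rightarrow> 'a set set \<Rightarrow> bool" where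
  "k_connected k V E \<longleftrightarrow> card V > k \<and>
     (\<forall>X. X \<subseteq> V \<and> card X < k \<longrightarrow> connected_graph (V - X) {e\<in>E. e \<inter> X = {}})"

definition colourable :: "nat \<Rightarrow> 'a set \<Rightarrow> 'a set set \<Rightarrow> bool" where
  "colourable k V E \<longleftrightarrow> (\<exists>c :: 'a \<Rightarrow> nat. (\<forall>v\<in>V. c v < k) \<and>
     (\<forall>u\<in>V. \<forall>v\<in>V. {u, v} \<in> E \<longrightarrow> c u \<noteq> c v))"

definition has_cycle :: "'a set \<Rightarrow> 'a set set \<Rightarrow> bool" where
  "has_cycle V E \<longleftrightarrow> (\<exists>cs. length cs \<ge> 3 \<and> distinct cs \<and> set cs \<subseteq> V \<and>
     (\<forall>i<length cs. {cs ! i, cs ! ((i + 1) mod length cs)} \<in> E))"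

definition is_tree :: "'a set \<Rightarrow> 'a set set \<Rightarrow> bool" where
  "is_tree N F \<longleftrightarrow> simple_graph N F \<and> connected_graph N F \<and> \<not> has_cycle N F"

definition degree :: "'a set set \<Rightarrow> 'a \<Rightarrow> nat" where
  "degree F v = card {u. {u, v} \<in> F}"

definition leaves :: "'a set \<Rightarrow> 'a set set \<Rightarrow> 'a set" where
  "leaves N F = {v\<in>N. degree F v = 1}"

definition subtree :: "'a set \<Rightarrow> 'a set set \<Rightarrow> 'a set \<Rightarrow> bool" where
  "subtree N F S \<longleftrightarrow> S \<subseteq> N \<and> connected_graph S {e\<in>F. e \<subseteq> S}"

definition overlap :: "'a set \<Rightarrow> 'a set \<Rightarrow> bool" where
  "overlap a b \<longleftrightarrow> a \<inter> b \<noteq> {} \<and> a - b \<noteq> {} \<and> b - a \<noteq> {}"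

definition overlap_graph_of_subtrees :: "'v set \<Rightarrow> 'v set set \<Rightarrow> 'n set \<Rightarrow> 'n set set \<Rightarrow> bool" where
  "overlap_graph_of_subtrees V E N F \<longleftrightarrow> (\<exists>S :: 'v \<Rightarrow> 'n set.
     (\<forall>x\<in>V. subtree N F (S x)) \<and>
     (\<forall>x\<in>V. \<forall>y\<in>V. x \<noteq> y \<longrightarrow> ({x, y} \<in> E \<longleftrightarrow> overlap (S x) (S y))))"

text \<open>Vertices: Cp i v = copy i (i<6) of vertex v (V1); ER e = edge representative of
  edge e of E' (V2); Fv i v = f(Cp i v) (V3); Vs, Vb, Xi j (j<d) = the copy of G_d^0 (V4).\<close>
datatype 'a bvert = Cp nat 'a | ER "(nat \<times> 'a) set" | Fv nat 'a | Vs | Vb | Xi nat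

definition copy_edges :: "'a set set \<Rightarrow> (nat \<times> 'a) set set" where
  "copy_edges E = {{(i, u), (i, v)} | i u v. i < 6 \<and> {u, v} \<in> E}"

definition blocked_V1 :: "'a set \<Rightarrow> 'a bvert set" where
  "blocked_V1 V = {Cp i v | i v. i < 6 \<and> v \<in> V}"

definition blocked_V2 :: "'a set set \<Rightarrow> 'a bvert set" where
  "blocked_V2 E = ER ` copy_edges E"

definition blocked_V3 :: "'a set \<Rightarrow> 'a bvert set" where
  "blocked_V3 V = {Fv i v | i v. i < 6 \<and> v \<in> V}"

definition blocked_V4 :: "nat \<Rightarrow> 'a bvert set" where
  "blocked_V4 d = {Vs, Vb} \<union> Xi ` {..<d}"

definition blocked_V :: "nat \<Rightarrow> 'a set \<Rightarrow> 'a set set \<Rightarrow> 'a bvert set" where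
  "blocked_V d V E = blocked_V1 V \<union> blocked_V2 E \<union> blocked_V3 V \<union> blocked_V4 d"

definition blocked_E :: "nat \<Rightarrow> 'a set \<Rightarrow> 'a set set \<Rightarrow> 'a bvert set set" where
  "blocked_E d V E =
     {{Cp i v, ER e} | i v e. i < 6 \<and> v \<in> V \<and> e \<in> copy_edges E \<and> (i, v) \<in> e}
   \<union> {{x, y} | x y. x \<in> blocked_V2 E \<union> blocked_V3 V \<and> y \<in> blocked_V2 E \<union> blocked_V3 V \<and> x \<noteq> y}
   \<union> {{Cp i v, Fv i v} | i v. i < 6 \<and> v \<in> V}
   \<union> {{x, Vs} | x. x \<in> blocked_V2 E \<union> blocked_V3 V}
   \<union> {{x, Vb} | x. x \<in> blocked_V2 E \<union> blocked_V3 V}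
   \<union> {{Vs, Xi j} | j. j < d}
   \<union> {{Xi j, Vb} | j. j < d}"

end

theory Submission
  imports Defs
begin


lemma fin_max:
  fixes f :: "'b \<Rightarrow> nat"
  assumes "finite X" "X \<noteq> {}"
  shows "\<exists>x\<in>X. \<forall>y\<in>X. f y \<le> f x"
proof -
  have "Max (f ` X) \<in> f ` X" using assms by auto
  then obtain x where x: "x \<in> X" "f x = Max (f ` X)" by auto
  have "\<forall>y\<in>X. f y \<le> Max (f ` X)" using assms by auto
  then show ?thesis using x by metis
qed

lemma edge_in_N:
  assumes "simple_graph N F" "{u, x} \<in> F"
  shows "u \<in> N" "x \<in> N" "u \<noteq> x"
  using assms unfolding simple_graph_def by (auto simp: doubleton_eq_iff)

locale rtree =
  fixes N :: "'n set" and F :: "'n set set" and r :: 'n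
  assumes tree: "is_tree N F" and rN: "r \<in> N"
begin

abbreviation "A \<equiv> adj_rel N F"

lemma sg: "simple_graph N F" using tree unfolding is_tree_def by auto
lemma finN: "finite N" using sg unfolding simple_graph_def by auto
lemma conn: "connected_graph N F" using tree unfolding is_tree_def by auto
lemma acyc: "\<not> has_cycle N F" using tree unfolding is_tree_def by auto

lemma A_iff: "(x, y) \<in> A \<longleftrightarrow> {x, y} \<in> F \<and> x \<in> N \<and> y \<in> N"
  unfolding adj_rel_def by auto

lemma A_edge: "(x, y) \<in> A \<longleftrightarrow> {x, y} \<in> F"
  using A_iff edge_in_N[OF sg] by blast

definition dep :: "'n \<Rightarrow> nat" where "dep x = (LEAST n. (r, x) \<in> A ^^ n)"

lemma reach: "x \<in> N \<Longrightarrow> (r, x) \<in> A ^^ (dep x)"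
proof -
  assume x: "x \<in> N"
  have "(r, x) \<in> A\<^sup>*" using conn x rN unfolding connected_graph_def by auto
  then obtain n where "(r, x) \<in> A ^^ n" using rtrancl_power by blast
  then show ?thesis unfolding dep_def by (rule LeastI)
qed

lemma dep_le: "(r, x) \<in> A ^^ n \<Longrightarrow> dep x \<le> n"
  unfolding dep_def by (rule Least_le)

lemma dep_edge: "{x, y} \<in> F \<Longrightarrow> dep y \<le> Suc (dep x)"
proof -
  assume e: "{x, y} \<in> F"
  then have xy: "(x, y) \<in> A" "x \<in> N" using A_edge edge_in_N[OF sg] by auto
  have "(r, y) \<in> A ^^ Suc (dep x)" using reach[OF xy(2)] xy(1) by auto
  then show ?thesis by (rule dep_le)
qed

lemma dep0: "x \<in> N \<Longrightarrow> dep x = 0 \<longleftrightarrow> x = r"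
proof
  assume "x \<in> N" "dep x = 0" then show "x = r" using reach by fastforce
next
  assume "x = r" then show "dep x = 0" using dep_le[of r 0] by auto
qed

definition par :: "'n \<Rightarrow> 'n" where
  "par x = (SOME y. {y, x} \<in> F \<and> Suc (dep y) = dep x)"

lemma par_ex: "x \<in> N \<Longrightarrow> x \<noteq> r \<Longrightarrow> \<exists>y. {y, x} \<in> F \<and> Suc (dep y) = dep x"
proof -
  assume x: "x \<in> N" "x \<noteq> r"
  then obtain k where k: "dep x = Suc k" using dep0 by (cases "dep x") auto
  then have "(r, x) \<in> A ^^ Suc k" using reach[OF x(1)] by simp
  then obtain y where y: "(r, y) \<in> A ^^ k" "(y, x) \<in> A" by auto
  have "dep y \<le> k" using y(1) by (rule dep_le)
  moreover have "dep x \<le> Suc (dep y)" using y(2) dep_edge A_edge by blast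
  ultimately have "Suc (dep y) = dep x" using k by auto
  then show ?thesis using y(2) A_edge by blast
qed

lemma par: assumes "x \<in> N" "x \<noteq> r"
  shows "{par x, x} \<in> F" "Suc (dep (par x)) = dep x" "par x \<in> N"
proof -
  have "{par x, x} \<in> F \<and> Suc (dep (par x)) = dep x"
    unfolding par_def using someI_ex[OF par_ex[OF assms]] .
  then show "{par x, x} \<in> F" "Suc (dep (par x)) = dep x" by auto
  then show "par x \<in> N" using edge_in_N[OF sg] by blast
qed

lemma parpow: "x \<in> N \<Longrightarrow> i \<le> dep x \<Longrightarrow> (par ^^ i) x \<in> N \<and> dep ((par ^^ i) x) = dep x - i"
proof (induction i)
  case 0 then show ?case by simp
next
  case (Suc i)
  then have IH: "(par ^^ i) x \<in> N" "dep ((par ^^ i) x) = dep x - i" by auto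
  have "dep ((par ^^ i) x) \<noteq> 0" using IH Suc.prems by auto
  then have "(par ^^ i) x \<noteq> r" using IH(1) dep0 by auto
  then show ?case using par[of "(par ^^ i) x"] IH Suc.prems by auto
qed

definition anc :: "'n \<Rightarrow> 'n \<Rightarrow> bool" where
  "anc a b \<longleftrightarrow> (\<exists>i\<le>dep b. (par ^^ i) b = a)"

lemma parpow_N: "x \<in> N \<Longrightarrow> i \<le> dep x \<Longrightarrow> (par ^^ i) x \<in> N"
  using parpow by blast
lemma parpow_dep: "x \<in> N \<Longrightarrow> i \<le> dep x \<Longrightarrow> dep ((par ^^ i) x) = dep x - i"
  using parpow by blast

lemma parpow_root: "x \<in> N \<Longrightarrow> (par ^^ dep x) x = r"
  using parpow[of x "dep x"] dep0 by auto

lemma par_ne_r: "x \<in> N \<Longrightarrow> i < dep x \<Longrightarrow> (par ^^ i) x \<noteq> r"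
  using parpow[of x i] dep0[of "(par ^^ i) x"] by auto

lemma edge_par:
  assumes e: "{a, b} \<in> F"
  shows "(a \<noteq> r \<and> b = par a) \<or> (b \<noteq> r \<and> a = par b)"
proof (rule ccontr)
  assume H: "\<not> ?thesis"
  have aN: "a \<in> N" and bN: "b \<in> N" and ab: "a \<noteq> b" using edge_in_N[OF sg e] by auto
  define P where "P i \<longleftrightarrow> i \<le> dep a \<and> (\<exists>j \<le> dep b. (par ^^ i) a = (par ^^ j) b)" for i
  have "P (dep a)" unfolding P_def using parpow_root[OF aN] parpow_root[OF bN] by auto
  define i where "i = (LEAST i. P i)"
  have Pi: "P i" unfolding i_def by (rule LeastI) fact
  have minP: "\<And>k. k < i \<Longrightarrow> \<not> P k" unfolding i_def by (rule not_less_Least)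
  obtain j where j: "j \<le> dep b" "(par ^^ i) a = (par ^^ j) b" using Pi unfolding P_def by auto
  have ia: "i \<le> dep a" using Pi unfolding P_def by auto
  define m where "m = (par ^^ i) a"
  have depm: "dep m = dep a - i" "dep m = dep b - j"
    using parpow_dep[OF aN ia] parpow_dep[OF bN j(1)] j(2) unfolding m_def by auto
  define L where "L = i + j + 1"
  define g where "g n = (if n \<le> i then (par ^^ n) a else (par ^^ (L - 1 - n)) b)" for n
  have ij2: "i + j \<ge> 2"
  proof (rule ccontr)
    assume "\<not> i + j \<ge> 2"
    then have "(i = 0 \<and> j = 0) \<or> (i = 0 \<and> j = 1) \<or> (i = 1 \<and> j = 0)" by auto
    then show False
    proof (elim disjE)
      assume "i = 0 \<and> j = 0" then show False using j ab by auto
    next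
      assume h: "i = 0 \<and> j = 1"
      then have "b \<noteq> r" using j(1) dep0[OF bN] by auto
      then show False using h j H by auto
    next
      assume h: "i = 1 \<and> j = 0"
      then have "a \<noteq> r" using ia dep0[OF aN] by auto
      then show False using h j H by auto
    qed
  qed
  have gN: "g n \<in> N" if "n < L" for n
    using that parpow_N[OF aN, of n] parpow_N[OF bN, of "L - 1 - n"] ia j(1) unfolding g_def L_def
    by auto
  have inj: "inj_on g {0..<L}"
  proof (rule inj_onI)
    fix n n' assume n: "n \<in> {0..<L}" and n': "n' \<in> {0..<L}" and eq: "g n = g n'"
    have c1: "n = n'" if "n \<le> i" "n' \<le> i" "g n = g n'" for n n'
    proof -
      have "dep a - n = dep a - n'" using that parpow_dep[OF aN, of n] parpow_dep[OF aN, of n'] ia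
        unfolding g_def by auto
      then show ?thesis using that ia by auto
    qed
    have c2: "n = n'" if "n > i" "n' > i" "n < L" "n' < L" "g n = g n'" for n n'
    proof -
      have "dep b - (L - 1 - n) = dep b - (L - 1 - n')"
        using that parpow_dep[OF bN, of "L - 1 - n"] parpow_dep[OF bN, of "L - 1 - n'"] j(1)
        unfolding g_def L_def by auto
      then show ?thesis using that j(1) unfolding L_def by auto
    qed
    have c3: "False" if "n \<le> i" "n' > i" "n' < L" "g n = g n'" for n n'
    proof -
      define k where "k = L - 1 - n'"
      have k: "k < j" using that unfolding k_def L_def by auto
      have eq2: "(par ^^ n) a = (par ^^ k) b" using that unfolding g_def k_def by auto
      have "P n" unfolding P_def using eq2 k j(1) ia that(1) by (auto intro!: exI[of _ k])
      then have "n = i" using minP[of n] that(1) by (cases "n < i") auto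
      then have "dep m = dep b - k" using eq2 parpow_dep[OF bN, of k] k j(1) unfolding m_def by auto
      then show False using depm k j(1) by auto
    qed
    show "n = n'"
    proof (cases "n \<le> i")
      case True
      show ?thesis
      proof (cases "n' \<le> i")
        case True then show ?thesis using c1 \<open>n \<le> i\<close> eq by auto
      next
        case False then show ?thesis using c3[of n n'] \<open>n \<le> i\<close> eq n' by auto
      qed
    next
      case False
      show ?thesis
      proof (cases "n' \<le> i")
        case True then show ?thesis using c3[of n' n] False eq n by auto
      next
        case False then show ?thesis using c2[of n n'] \<open>\<not> n \<le> i\<close> eq n n' by auto
      qed
    qed
  qed
  have pe: "{x, par x} \<in> F" if "x \<in> N" "x \<noteq> r" for x
    using par(1)[OF that] by (simp add: insert_commute)
  have edges: "{g n, g ((n + 1) mod L)} \<in> F" if n: "n < L" for n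
  proof -
    consider "n < i" | "n = i \<and> j = 0" | "n = i \<and> j > 0" | "i < n \<and> n < L - 1" | "i < n \<and> n = L - 1"
      using n unfolding L_def by linarith
    then show ?thesis
    proof cases
      case 1
      then have "(n + 1) mod L = n + 1" using n unfolding L_def by auto
      moreover have "g (n + 1) = par (g n)" using 1 unfolding g_def by auto
      moreover have "g n \<noteq> r" "g n \<in> N" using 1 par_ne_r[OF aN, of n] ia gN[OF n] unfolding g_def by auto
      ultimately show ?thesis using pe by auto
    next
      case 2
      then have "(n + 1) mod L = 0" unfolding L_def by auto
      then show ?thesis using 2 j e unfolding g_def by (auto simp: insert_commute)
    next
      case 3
      then have "(n + 1) mod L = i + 1" unfolding L_def by auto
      moreover have "g (i + 1) = (par ^^ (j - 1)) b" unfolding g_def L_def by auto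
      moreover have "par ((par ^^ (j - 1)) b) = (par ^^ j) b" using 3
        by (metis Suc_pred' funpow.simps(2) o_apply)
      moreover have jj: "j - 1 < dep b" using 3 j(1) by auto
      moreover have "(par ^^ (j - 1)) b \<noteq> r" "(par ^^ (j - 1)) b \<in> N"
        using par_ne_r[OF bN jj] parpow_N[OF bN, of "j - 1"] jj by auto
      ultimately show ?thesis using 3 j pe[of "(par ^^ (j - 1)) b"] unfolding g_def
        by (auto simp: insert_commute)
    next
      case 4
      then have "(n + 1) mod L = n + 1" unfolding L_def by auto
      moreover have "g n = par (g (n + 1))"
      proof -
        have "i + j - n = Suc (i + j - Suc n)" using 4 unfolding L_def by auto
        then show ?thesis using 4 unfolding g_def L_def by simp
      qed
      moreover have jj: "L - 1 - (n + 1) < dep b" using 4 j(1) unfolding L_def by linarith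
      moreover have "g (n + 1) \<noteq> r" "g (n + 1) \<in> N"
        using 4 par_ne_r[OF bN jj] gN[of "n + 1"] unfolding g_def L_def by auto
      ultimately show ?thesis using pe[of "g (n + 1)"] by (auto simp: insert_commute)
    next
      case 5
      then have "(n + 1) mod L = 0" unfolding L_def by auto
      moreover have "g n = b" "g 0 = a" using 5 unfolding g_def L_def by auto
      ultimately show ?thesis using e by (auto simp: insert_commute)
    qed
  qed
  have "has_cycle N F"
    unfolding has_cycle_def
  proof (intro exI conjI)
    show "3 \<le> length (map g [0..<L])" using ij2 unfolding L_def by simp
    show "distinct (map g [0..<L])" using inj by (simp add: distinct_map)
    show "set (map g [0..<L]) \<subseteq> N" using gN by auto
    show "\<forall>n<length (map g [0..<L]). {map g [0..<L] ! n, map g [0..<L] ! ((n + 1) mod length (map g [0..<L]))} \<in> F"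
    proof (intro allI impI)
      fix n assume "n < length (map g [0..<L])"
      then have n: "n < L" by simp
      have "(n + 1) mod L < L" using n by auto
      then show "{map g [0..<L] ! n, map g [0..<L] ! ((n + 1) mod length (map g [0..<L]))} \<in> F"
        using edges[OF n] n by simp
    qed
  qed
  then show False using acyc by simp
qed


lemma anc_refl: "anc a a" unfolding anc_def by (intro exI[of _ 0]) auto

lemma anc_N_dep: "b \<in> N \<Longrightarrow> anc a b \<Longrightarrow> a \<in> N \<and> dep a \<le> dep b"
  unfolding anc_def using parpow by auto

lemma anc_parI: "b \<in> N \<Longrightarrow> b \<noteq> r \<Longrightarrow> anc a (par b) \<Longrightarrow> anc a b"
proof -
  assume b: "b \<in> N" "b \<noteq> r" "anc a (par b)"
  then obtain i where i: "i \<le> dep (par b)" "(par ^^ i) (par b) = a" unfolding anc_def by auto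
  have "(par ^^ Suc i) b = a" using i(2) by (simp add: funpow_Suc_right del: funpow.simps)
  moreover have "Suc i \<le> dep b" using i(1) par(2)[OF b(1,2)] by auto
  ultimately show ?thesis unfolding anc_def by blast
qed

lemma anc_par_self: "b \<in> N \<Longrightarrow> b \<noteq> r \<Longrightarrow> anc (par b) b"
  using anc_parI anc_refl by blast

lemma anc_par_of: "b \<in> N \<Longrightarrow> anc a b \<Longrightarrow> a \<noteq> b \<Longrightarrow> b \<noteq> r \<and> anc a (par b)"
proof -
  assume b: "b \<in> N" "anc a b" "a \<noteq> b"
  then obtain i where i: "i \<le> dep b" "(par ^^ i) b = a" unfolding anc_def by auto
  then obtain k where k: "i = Suc k" using b(3) by (cases i) auto
  have br: "b \<noteq> r" using i k dep0[OF b(1)] by auto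
  have "(par ^^ k) (par b) = a" using i(2) k by (simp add: funpow_Suc_right del: funpow.simps)
  moreover have "k \<le> dep (par b)" using i(1) k par(2)[OF b(1) br] by auto
  ultimately show ?thesis using br unfolding anc_def by blast
qed

lemma anc_trans: "c \<in> N \<Longrightarrow> anc a b \<Longrightarrow> anc b c \<Longrightarrow> anc a c"
proof -
  assume c: "c \<in> N" "anc a b" "anc b c"
  then obtain j where j: "j \<le> dep c" "(par ^^ j) c = b" unfolding anc_def by auto
  moreover obtain i where i: "i \<le> dep b" "(par ^^ i) b = a" using c unfolding anc_def by auto
  moreover have "dep b = dep c - j" using parpow_dep[OF c(1) j(1)] j(2) by simp
  ultimately have "i + j \<le> dep c" "(par ^^ (i + j)) c = a" by (auto simp: funpow_add)
  then show ?thesis unfolding anc_def by blast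
qed

lemma anc_antisym: "b \<in> N \<Longrightarrow> anc a b \<Longrightarrow> anc b a \<Longrightarrow> a = b"
proof -
  assume h: "b \<in> N" "anc a b" "anc b a"
  then obtain i where i: "i \<le> dep b" "(par ^^ i) b = a" unfolding anc_def by auto
  have "a \<in> N" using anc_N_dep h by blast
  then have "dep b \<le> dep a" using anc_N_dep h by blast
  moreover have "dep a = dep b - i" using parpow_dep[OF h(1) i(1)] i(2) by simp
  ultimately have "i = 0" using i by auto
  then show ?thesis using i by simp
qed

lemma anc_total: "l \<in> N \<Longrightarrow> anc a l \<Longrightarrow> anc b l \<Longrightarrow> anc a b \<or> anc b a"
proof -
  assume h: "l \<in> N" "anc a l" "anc b l"
  obtain i where i: "i \<le> dep l" "(par ^^ i) l = a" using h unfolding anc_def by auto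
  obtain j where j: "j \<le> dep l" "(par ^^ j) l = b" using h unfolding anc_def by auto
  have da: "dep a = dep l - i" using parpow_dep[OF h(1) i(1)] i(2) by simp
  have db: "dep b = dep l - j" using parpow_dep[OF h(1) j(1)] j(2) by simp
  show ?thesis
  proof (cases "i \<le> j")
    case True
    then have "(par ^^ (j - i)) a = b" using i(2) j(2)
      by (metis funpow_add le_add_diff_inverse2 o_apply)
    moreover have "j - i \<le> dep a" using da True j(1) by auto
    ultimately show ?thesis unfolding anc_def by blast
  next
    case False
    then have "(par ^^ (i - j)) b = a" using i(2) j(2)
      by (metis funpow_add le_add_diff_inverse2 o_apply nat_le_linear)
    moreover have "i - j \<le> dep b" using db False i(1) by auto
    ultimately show ?thesis unfolding anc_def by blast
  qed
qed

lemma anc_root: "x \<in> N \<Longrightarrow> anc r x"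
  unfolding anc_def using parpow_root by blast

lemma reach_closed:
  assumes "(u, w) \<in> R\<^sup>*" "u \<in> D" "\<And>p q. (p, q) \<in> R \<Longrightarrow> p \<in> D \<Longrightarrow> q \<in> D"
  shows "w \<in> D"
  using assms by (induction rule: rtrancl_induct) auto

definition istop :: "'n set \<Rightarrow> 'n \<Rightarrow> bool" where
  "istop X t \<longleftrightarrow> t \<in> X \<and> (\<forall>y\<in>X. dep t \<le> dep y)"

lemma top_ex: "X \<noteq> {} \<Longrightarrow> \<exists>t. istop X t"
proof -
  assume "X \<noteq> {}"
  then obtain k where "k \<in> X" by auto
  from ex_has_least_nat[of "\<lambda>x. x \<in> X", OF this, of dep] show ?thesis
    unfolding istop_def by auto
qed

lemma sub_N: "subtree N F X \<Longrightarrow> X \<subseteq> N" unfolding subtree_def by auto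
lemma sub_ne: "subtree N F X \<Longrightarrow> X \<noteq> {}" unfolding subtree_def connected_graph_def by auto

lemma top_closed:
  assumes X: "subtree N F X" and t: "istop X t" and y: "y \<in> X" "y \<noteq> t"
  shows "y \<noteq> r \<and> par y \<in> X"
proof -
  have XN: "X \<subseteq> N" using X sub_N by auto
  have yr: "y \<noteq> r"
  proof
    assume "y = r"
    then have "dep t = 0" using t y dep0 rN unfolding istop_def by fastforce
    then show False using t XN dep0 y \<open>y = r\<close> unfolding istop_def by auto
  qed
  show ?thesis
  proof (rule ccontr)
    assume "\<not> ?thesis"
    then have py: "par y \<notin> X" using yr by auto
    define D where "D = {w \<in> X. anc y w}"
    have yD: "y \<in> D" unfolding D_def using y anc_refl by auto
    have "(y, t) \<in> (adj_rel X {e \<in> F. e \<subseteq> X})\<^sup>*"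
      using X y t unfolding subtree_def connected_graph_def istop_def by auto
    then have "t \<in> D"
    proof (rule reach_closed[OF _ yD])
      fix p q assume pq: "(p, q) \<in> adj_rel X {e \<in> F. e \<subseteq> X}" "p \<in> D"
      then have e: "{p, q} \<in> F" "p \<in> X" "q \<in> X" and ay: "anc y p" unfolding adj_rel_def D_def by auto
      have pN: "p \<in> N" "q \<in> N" using e XN by auto
      from edge_par[OF e(1)] show "q \<in> D"
      proof
        assume h: "p \<noteq> r \<and> q = par p"
        have "p \<noteq> y" using h py e by auto
        then have "anc y (par p)" using anc_par_of[OF pN(1) ay] by auto
        then show ?thesis using h e unfolding D_def by auto
      next
        assume h: "q \<noteq> r \<and> p = par q"
        then have "anc y q" using anc_parI[OF pN(2)] ay by auto
        then show ?thesis using e unfolding D_def by auto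
      qed
    qed
    then have "anc y t" unfolding D_def by auto
    moreover have "dep t \<le> dep y" using t y unfolding istop_def by auto
    moreover have "t \<in> N" using t XN unfolding istop_def by auto
    ultimately obtain i where i: "i \<le> dep t" "(par ^^ i) t = y" "t \<in> N" "dep t \<le> dep y"
      unfolding anc_def by auto
    then have "dep y = dep t - i" using parpow_dep[OF i(3) i(1)] by simp
    then have "i = 0" using i by auto
    then show False using i y by simp
  qed
qed

lemma top_anc:
  assumes X: "subtree N F X" and t: "istop X t"
  shows "y \<in> X \<Longrightarrow> anc t y"
proof (induction "dep y" arbitrary: y rule: less_induct)
  case less
  show ?case
  proof (cases "y = t")
    case True then show ?thesis using anc_refl by simp
  next
    case False
    then have h: "y \<noteq> r" "par y \<in> X" using top_closed[OF X t less.prems] by auto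
    have yN: "y \<in> N" using less.prems X sub_N by auto
    have "anc t (par y)" using less.hyps[of "par y"] h par(2)[OF yN h(1)] by auto
    then show ?thesis using anc_parI[OF yN h(1)] by auto
  qed
qed

lemma top_up:
  assumes X: "subtree N F X" and t: "istop X t" and y: "y \<in> X" and w: "anc w y" and dw: "dep t \<le> dep w"
  shows "w \<in> X"
proof -
  have yN: "y \<in> N" using y X sub_N by auto
  obtain i where i: "i \<le> dep y" "(par ^^ i) y = w" using w unfolding anc_def by auto
  have "\<forall>s\<le>i. (par ^^ s) y \<in> X"
  proof (intro allI impI)
    fix s assume "s \<le> i"
    then show "(par ^^ s) y \<in> X"
    proof (induction s)
      case 0 then show ?case using y by simp
    next
      case (Suc s)
      then have IH: "(par ^^ s) y \<in> X" by auto
      have "dep ((par ^^ s) y) = dep y - s" using parpow_dep[OF yN] Suc.prems i by auto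
      moreover have "dep w = dep y - i" using parpow_dep[OF yN i(1)] i(2) by auto
      ultimately have "dep ((par ^^ s) y) > dep t" using Suc.prems dw i by auto
      then have "(par ^^ s) y \<noteq> t" by auto
      then show ?case using top_closed[OF X t IH] by simp
    qed
  qed
  then show ?thesis using i by auto
qed

lemma convex:
  assumes X: "subtree N F X" and a: "a \<in> X" and b: "b \<in> X" and w1: "anc w b" and w2: "anc a w"
  shows "w \<in> X"
proof -
  obtain t where t: "istop X t" using top_ex sub_ne[OF X] by blast
  have bN: "b \<in> N" using b X sub_N by auto
  have wN: "w \<in> N" "dep w \<le> dep b" using anc_N_dep[OF bN w1] by auto
  have "dep a \<le> dep w" using anc_N_dep[OF wN(1) w2] by auto
  moreover have "dep t \<le> dep a" using t a unfolding istop_def by auto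
  ultimately show ?thesis using top_up[OF X t b w1] by auto
qed

lemma root_closed:
  assumes X: "subtree N F X" and "r \<in> X" "y \<in> X" "anc w y"
  shows "w \<in> X"
proof -
  have "dep r = 0" using dep0 rN by auto
  then have "istop X r" unfolding istop_def using assms by auto
  then show ?thesis using top_up[OF X _ assms(3,4)] \<open>dep r = 0\<close> by auto
qed

lemma helly:
  assumes S: "\<forall>x\<in>I. subtree N F (S x)" and I: "I \<noteq> {}"
    and P: "\<forall>x\<in>I. \<forall>y\<in>I. S x \<inter> S y \<noteq> {}"
  shows "\<exists>z\<in>N. \<forall>x\<in>I. z \<in> S x"
proof -
  define tp where "tp x = (SOME t. istop (S x) t)" for x
  have tp: "istop (S x) (tp x)" if "x \<in> I" for x
  proof -
    have "\<exists>t. istop (S x) t" using top_ex sub_ne S that by blast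
    then show ?thesis unfolding tp_def by (rule someI_ex)
  qed
  have "tp ` I \<subseteq> N"
  proof
    fix t assume "t \<in> tp ` I"
    then obtain x where "x \<in> I" "t = tp x" by auto
    then show "t \<in> N" using tp[of x] S sub_N[of "S x"] unfolding istop_def by auto
  qed
  then have fin: "finite (tp ` I)" using finN finite_subset by auto
  obtain t0 where t0: "t0 \<in> tp ` I" "\<forall>y\<in>tp ` I. dep y \<le> dep t0"
    using fin_max[OF fin] I by blast
  then obtain x0 where x0: "x0 \<in> I" "t0 = tp x0" by auto
  have "t0 \<in> S x0" using tp[OF x0(1)] x0(2) unfolding istop_def by simp
  then have "t0 \<in> N" using sub_N[of "S x0"] S x0(1) by auto
  moreover have "\<forall>x\<in>I. t0 \<in> S x"
  proof
    fix x assume x: "x \<in> I"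
    obtain y where y: "y \<in> S x" "y \<in> S x0" using P x x0 by blast
    have s0: "subtree N F (S x0)" and sx: "subtree N F (S x)" using S x x0 by auto
    have a: "anc t0 y" using top_anc[OF s0 tp[OF x0(1)] y(2)] x0(2) by simp
    have "dep (tp x) \<le> dep t0" using t0 x by auto
    then show "t0 \<in> S x" by (rule top_up[OF sx tp[OF x] y(1) a])
  qed
  ultimately show ?thesis by blast
qed

end


context rtree begin

lemma nbr_sub: "{u. {u, x} \<in> F} \<subseteq> N"
  using edge_in_N[OF sg] by auto

lemma nbr_fin: "finite {u. {u, x} \<in> F}"
  using finite_subset[OF nbr_sub finN] .

lemma par_edge: "x \<in> N \<Longrightarrow> x \<noteq> r \<Longrightarrow> {x, par x} \<in> F"
  using par(1) by (simp add: insert_commute)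

lemma leaf_below:
  assumes b: "b \<in> N" "b \<noteq> r"
  shows "\<exists>l\<in>leaves N F. anc b l"
proof -
  define D where "D = {w \<in> N. anc b w}"
  have "finite D" "D \<noteq> {}" using finN b anc_refl unfolding D_def by auto
  then obtain l where l: "l \<in> D" "\<forall>y\<in>D. dep y \<le> dep l" using fin_max by blast
  have lN: "l \<in> N" "anc b l" using l unfolding D_def by auto
  have "dep b \<le> dep l" using anc_N_dep[OF lN] by auto
  moreover have "dep b \<noteq> 0" using dep0 b by auto
  ultimately have lr: "l \<noteq> r" using dep0[OF lN(1)] by auto
  have "{u. {u, l} \<in> F} = {par l}"
  proof
    show "{par l} \<subseteq> {u. {u, l} \<in> F}" using par(1)[OF lN(1) lr] by auto
    show "{u. {u, l} \<in> F} \<subseteq> {par l}"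
    proof
      fix u assume "u \<in> {u. {u, l} \<in> F}"
      then have e: "{u, l} \<in> F" by auto
      have uN: "u \<in> N" using e edge_in_N[OF sg] by auto
      from edge_par[OF e] show "u \<in> {par l}"
      proof
        assume h: "u \<noteq> r \<and> l = par u"
        then have "anc l u" using anc_par_self[OF uN] by auto
        then have "anc b u" using anc_trans[OF uN lN(2)] by auto
        then have "u \<in> D" using uN unfolding D_def by auto
        then have "dep u \<le> dep l" using l by auto
        moreover have "Suc (dep l) = dep u" using par(2)[OF uN] h by auto
        ultimately show ?thesis by auto
      qed auto
    qed
  qed
  then have "l \<in> leaves N F" using lN unfolding leaves_def degree_def by auto
  then show ?thesis using lN by auto
qed

lemma chain_leaf:
  assumes X: "subtree N F X" and rX: "r \<notin> X" and deg: "\<forall>w\<in>X. degree F w \<le> 2"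
  shows "\<exists>l\<in>leaves N F. \<forall>x\<in>X. anc x l"
proof -
  have XN: "X \<subseteq> N" using sub_N[OF X] .
  have "finite X" using XN finN finite_subset by auto
  then obtain b where b: "b \<in> X" "\<forall>y\<in>X. dep y \<le> dep b" using fin_max sub_ne[OF X] by blast
  obtain t where t: "istop X t" using top_ex sub_ne[OF X] by blast
  have bN: "b \<in> N" using b XN by auto
  have all: "anc x b" if x: "x \<in> X" for x
  proof -
    have xN: "x \<in> N" using x XN by auto
    have tx: "anc t x" using top_anc[OF X t x] .
    have tb: "anc t b" using top_anc[OF X t b(1)] .
    obtain i0 where i0: "i0 \<le> dep x" "(par ^^ i0) x = t" using tx unfolding anc_def by auto
    define Q where "Q s \<longleftrightarrow> s \<le> dep x \<and> anc ((par ^^ s) x) b" for s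
    have "Q i0" unfolding Q_def using i0 tb by auto
    define s0 where "s0 = (LEAST s. Q s)"
    have Qs0: "Q s0" unfolding s0_def by (rule LeastI) fact
    have mins: "\<And>k. k < s0 \<Longrightarrow> \<not> Q k" unfolding s0_def by (rule not_less_Least)
    have s0i0: "s0 \<le> i0" using mins[of i0] \<open>Q i0\<close> by (cases "i0 < s0") auto
    have dept: "dep t = dep x - i0" using parpow_dep[OF xN i0(1)] i0(2) by simp
    show ?thesis
    proof (cases s0)
      case 0 then show ?thesis using Qs0 unfolding Q_def by simp
    next
      case (Suc k)
      define y where "y = (par ^^ k) x"
      define w where "w = (par ^^ s0) x"
      have kx: "k \<le> dep x" using Suc Qs0 unfolding Q_def by auto
      have yN: "y \<in> N" and depy: "dep y = dep x - k" using parpow[OF xN kx] unfolding y_def by auto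
      have yr: "y \<noteq> r" using par_ne_r[OF xN, of k] Suc Qs0 unfolding Q_def y_def by auto
      have wpy: "w = par y" unfolding w_def y_def Suc by simp
      have nyb: "\<not> anc y b" using mins[of k] Suc kx unfolding Q_def y_def by auto
      have wb: "anc w b" using Qs0 unfolding Q_def w_def by auto
      have ayx: "anc y x" unfolding anc_def y_def using kx by auto
      have yX: "y \<in> X"
        using top_up[OF X t x ayx] depy dept s0i0 Suc kx by auto
      have depw: "dep w = dep x - s0" using parpow_dep[OF xN] Qs0 unfolding Q_def w_def by auto
      have awx: "anc w x" unfolding anc_def w_def using Qs0 unfolding Q_def by auto
      have wX: "w \<in> X"
        using top_up[OF X t x awx] depw dept s0i0 by auto
      have wN: "w \<in> N" using wX XN by auto
      have wr: "w \<noteq> r" using wX rX by auto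
      have dyw: "dep y = Suc (dep w)" using par(2)[OF yN yr] wpy by simp
      obtain j where j: "j \<le> dep b" "(par ^^ j) b = w" using wb unfolding anc_def by auto
      show ?thesis
      proof (cases j)
        case 0
        then have "w = b" using j by simp
        then show ?thesis using b(2) yX dyw by fastforce
      next
        case (Suc j')
        define y' where "y' = (par ^^ j') b"
        have j'b: "j' < dep b" using j Suc by auto
        have y'N: "y' \<in> N" and y'r: "y' \<noteq> r" using parpow_N[OF bN] par_ne_r[OF bN j'b] j'b
          unfolding y'_def by auto
        have wpy': "w = par y'" using j Suc unfolding y'_def by simp
        have y'b: "anc y' b" unfolding anc_def y'_def using j'b by (intro exI[of _ j']) auto
        have yy': "y \<noteq> y'" using nyb y'b by auto
        have dy'w: "dep y' = Suc (dep w)" using par(2)[OF y'N y'r] wpy' by simp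
        have pw: "dep (par w) < dep w" using par(2)[OF wN wr] by simp
        have sub3: "{y, y', par w} \<subseteq> {u. {u, w} \<in> F}"
          using par_edge[OF yN yr] par_edge[OF y'N y'r] par(1)[OF wN wr] wpy wpy' by auto
        have n1: "par w \<noteq> y" using pw dyw by (intro notI) auto
        have n2: "par w \<noteq> y'" using pw dy'w by (intro notI) auto
        have "card {y, y', par w} = 3" using yy' n1 n2 by auto
        then have "3 \<le> degree F w" unfolding degree_def using card_mono[OF nbr_fin sub3] by auto
        then show ?thesis using deg wX by auto
      qed
    qed
  qed
  obtain l where l: "l \<in> leaves N F" "anc b l"
    using leaf_below[OF bN] b rX by auto
  have "l \<in> N" using l unfolding leaves_def by auto
  then show ?thesis using l all anc_trans by blast
qed

lemma card_F: "card F = card N - 1"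
proof -
  define f where "f x = {x, par x}" for x
  have "bij_betw f (N - {r}) F"
  proof (rule bij_betw_imageI)
    show "inj_on f (N - {r})"
    proof (rule inj_onI)
      fix x y assume x: "x \<in> N - {r}" and y: "y \<in> N - {r}" and eq: "f x = f y"
      show "x = y"
      proof (rule ccontr)
        assume "x \<noteq> y"
        then have "x = par y" "par x = y" using eq unfolding f_def by (auto simp: doubleton_eq_iff)
        then show False using par(2)[of x] par(2)[of y] x y by auto
      qed
    qed
    show "f ` (N - {r}) = F"
    proof
      show "f ` (N - {r}) \<subseteq> F" using par_edge unfolding f_def by auto
      show "F \<subseteq> f ` (N - {r})"
      proof
        fix e assume e: "e \<in> F"
        then obtain a b where ab: "e = {a, b}" using sg unfolding simple_graph_def by blast
        have "a \<in> N" "b \<in> N" using e ab edge_in_N[OF sg] by auto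
        then show "e \<in> f ` (N - {r})" using edge_par[of a b] e ab unfolding f_def
          by (auto simp: insert_commute)
      qed
    qed
  qed
  then have "card F = card (N - {r})" by (simp add: bij_betw_same_card)
  then show ?thesis using rN finN by simp
qed

lemma edge_form: "e \<in> F \<Longrightarrow> \<exists>a b. e = {a, b} \<and> a \<noteq> b \<and> a \<in> N \<and> b \<in> N"
  using sg unfolding simple_graph_def by blast

lemma handshake: "(\<Sum>x\<in>N. degree F x) = 2 * card F"
proof -
  define B where "B x = {u. {u, x} \<in> F}" for x
  have "F \<subseteq> Pow N"
  proof
    fix e assume "e \<in> F"
    then obtain a b where "e = {a, b}" "a \<in> N" "b \<in> N" using edge_form by blast
    then show "e \<in> Pow N" by auto
  qed
  then have finF: "finite F" using finN finite_subset by blast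
  have "(\<Sum>x\<in>N. degree F x) = card (SIGMA x:N. B x)"
    unfolding degree_def B_def using finN nbr_fin by (simp add: card_SigmaI)
  also have "(SIGMA x:N. B x) = (\<Union>e\<in>F. {(x, u). {u, x} = e})"
  proof (rule set_eqI)
    fix p :: "'n \<times> 'n"
    obtain x u where p: "p = (x, u)" by fastforce
    have "{u, x} \<in> F \<Longrightarrow> x \<in> N" using edge_in_N(2)[OF sg] by blast
    then show "p \<in> (SIGMA x:N. B x) \<longleftrightarrow> p \<in> (\<Union>e\<in>F. {(x, u). {u, x} = e})"
      unfolding p B_def by blast
  qed
  also have "card \<dots> = (\<Sum>e\<in>F. card {(x, u). {u, x} = e})"
  proof (rule card_UN_disjoint[OF finF])
    show "\<forall>e\<in>F. finite {(x, u). {u, x} = e}"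
    proof
      fix e assume "e \<in> F"
      then obtain a b where "e = {a, b}" using edge_form by blast
      then have "{(x, u). {u, x} = e} \<subseteq> {(a, b), (b, a), (a, a), (b, b)}" by (auto simp: doubleton_eq_iff)
      then show "finite {(x, u). {u, x} = e}" using finite_subset by blast
    qed
    show "\<forall>e\<in>F. \<forall>e'\<in>F. e \<noteq> e' \<longrightarrow> {(x, u). {u, x} = e} \<inter> {(x, u). {u, x} = e'} = {}" by blast
  qed
  also have "\<dots> = (\<Sum>e\<in>F. 2)"
  proof (rule sum.cong)
    fix e assume "e \<in> F"
    then obtain a b where ab: "e = {a, b}" "a \<noteq> b" using edge_form by blast
    then have "{(x, u). {u, x} = e} = {(a, b), (b, a)}" by (auto simp: doubleton_eq_iff)
    then show "card {(x, u). {u, x} = e} = 2" using ab by simp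
  qed simp
  finally show ?thesis by simp
qed

lemma branch_unique:
  assumes L: "card (leaves N F) = d" and d3: "d \<ge> 3"
    and nd: "\<forall>v\<in>N. \<not> (2 < degree F v \<and> degree F v < d)"
    and b: "b1 \<in> N" "b2 \<in> N" "degree F b1 \<ge> 3" "degree F b2 \<ge> 3"
  shows "b1 = b2"
proof (rule ccontr)
  assume ne: "b1 \<noteq> b2"
  define Lv where "Lv = leaves N F"
  have LN: "Lv \<subseteq> N" unfolding Lv_def leaves_def by auto
  have "Lv \<noteq> {}" using L d3 unfolding Lv_def by auto
  then obtain l where l: "l \<in> N" "degree F l = 1" unfolding Lv_def leaves_def by auto
  then have "card {u. {u, l} \<in> F} = 1" unfolding degree_def by simp
  then obtain u0 where "{u. {u, l} \<in> F} = {u0}" by (rule card_1_singletonE)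
  then have u: "{u0, l} \<in> F" by auto
  define u where "u = u0"
  then have ul: "u \<noteq> l" "u \<in> N" using edge_in_N[OF sg u] unfolding u_def by auto
  have deg1: "degree F x \<ge> 1" if x: "x \<in> N" for x
  proof -
    have "\<exists>y. y \<in> N \<and> y \<noteq> x" by (cases "x = u") (use ul l in auto)
    then obtain y where y: "y \<in> N" "y \<noteq> x" by blast
    have "(x, y) \<in> A\<^sup>*" using conn x y unfolding connected_graph_def by auto
    then obtain p where "(x, p) \<in> A" using y(2) by (metis converse_rtranclE)
    then have "{p, x} \<in> F" using A_edge by (simp add: insert_commute)
    then have "{u. {u, x} \<in> F} \<noteq> {}" by auto
    then show ?thesis unfolding degree_def using nbr_fin by (simp add: Suc_le_eq card_gt_0_iff)
  qed
  define g where "g x = (if x \<in> Lv then 1 else 2) + (if x = b1 then d - 2 else 0) + (if x = b2 then d - 2 else 0)" for x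
  have "g x \<le> degree F x" if x: "x \<in> N" for x
  proof -
    have "degree F b1 \<ge> d" "degree F b2 \<ge> d" using nd b by force+
    moreover have "b1 \<notin> Lv" "b2 \<notin> Lv" using b unfolding Lv_def leaves_def by auto
    moreover have "x \<notin> Lv \<Longrightarrow> degree F x \<ge> 2" using deg1[OF x] x unfolding Lv_def leaves_def by auto
    moreover have "x \<in> Lv \<Longrightarrow> degree F x = 1" unfolding Lv_def leaves_def by auto
    ultimately show ?thesis unfolding g_def using ne d3 by auto
  qed
  then have "(\<Sum>x\<in>N. g x) \<le> (\<Sum>x\<in>N. degree F x)" by (rule sum_mono)
  also have "\<dots> = 2 * (card N - 1)" using handshake card_F by simp
  finally have ineq: "(\<Sum>x\<in>N. g x) \<le> 2 * (card N - 1)" .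
  have s1: "(\<Sum>x\<in>N. (if x \<in> Lv then 1 else 2)) = card Lv + 2 * (card N - card Lv)"
  proof -
    have "(\<Sum>x\<in>N. (if x \<in> Lv then 1 else (2::nat))) = (\<Sum>x\<in>N \<inter> {x. x \<in> Lv}. 1) + (\<Sum>x\<in>N \<inter> - {x. x \<in> Lv}. 2)"
      by (rule sum.If_cases[OF finN])
    also have "N \<inter> {x. x \<in> Lv} = Lv" using LN by auto
    also have "N \<inter> - {x. x \<in> Lv} = N - Lv" by auto
    finally show ?thesis using LN finN by (simp add: card_Diff_subset finite_subset)
  qed
  have "(\<Sum>x\<in>N. g x) = (\<Sum>x\<in>N. (if x \<in> Lv then 1 else 2)) + (\<Sum>x\<in>N. (if x = b1 then d - 2 else 0)) + (\<Sum>x\<in>N. (if x = b2 then d - 2 else 0))"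
    unfolding g_def by (simp add: sum.distrib)
  also have "\<dots> = card Lv + 2 * (card N - card Lv) + (d - 2) + (d - 2)"
    using s1 b finN by (simp add: sum.delta)
  finally have "(\<Sum>x\<in>N. g x) = card Lv + 2 * (card N - card Lv) + (d - 2) + (d - 2)" .
  moreover have "card Lv \<le> card N" using LN finN card_mono by auto
  moreover have "card Lv = d" using L Lv_def by simp
  ultimately show False using ineq d3 by linarith
qed

end



lemma M_Cp: "i < 6 \<Longrightarrow> v \<in> V \<Longrightarrow> Cp i v \<in> blocked_V d V E"
  unfolding blocked_V_def blocked_V1_def by auto
lemma M_Fv: "i < 6 \<Longrightarrow> v \<in> V \<Longrightarrow> Fv i v \<in> blocked_V d V E"
  unfolding blocked_V_def blocked_V3_def by auto
lemma M_Fv3: "i < 6 \<Longrightarrow> v \<in> V \<Longrightarrow> Fv i v \<in> blocked_V3 V"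
  unfolding blocked_V3_def by auto
lemma M_ER2: "e \<in> copy_edges E \<Longrightarrow> ER e \<in> blocked_V2 E"
  unfolding blocked_V2_def by auto
lemma M_K: "x \<in> blocked_V2 E \<union> blocked_V3 V \<Longrightarrow> x \<in> blocked_V d V E"
  unfolding blocked_V_def by auto
lemma E_K: "x \<in> blocked_V2 E \<union> blocked_V3 V \<Longrightarrow> y \<in> blocked_V2 E \<union> blocked_V3 V \<Longrightarrow> x \<noteq> y
   \<Longrightarrow> {x, y} \<in> blocked_E d V E"
  unfolding blocked_E_def by blast
lemma E_CpFv: "i < 6 \<Longrightarrow> v \<in> V \<Longrightarrow> {Cp i v, Fv i v} \<in> blocked_E d V E"
  unfolding blocked_E_def by blast
lemma E_CpER: "i < 6 \<Longrightarrow> v \<in> V \<Longrightarrow> e \<in> copy_edges E \<Longrightarrow> (i, v) \<in> e \<Longrightarrow> {Cp i v, ER e} \<in> blocked_E d V E"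
  unfolding blocked_E_def by blast
lemma V2_not_Cp: "Cp i v \<notin> blocked_V2 E" unfolding blocked_V2_def by auto
lemma V3_not_Cp: "Cp i v \<notin> blocked_V3 V" unfolding blocked_V3_def by auto
lemma NE_CpCp: "{Cp i u, Cp j v} \<notin> blocked_E d V E"
  unfolding blocked_E_def by (auto simp: doubleton_eq_iff V2_not_Cp V3_not_Cp)
lemma NE_FvCp: "{Fv i u, Cp j v} \<in> blocked_E d V E \<Longrightarrow> i = j \<and> u = v"
  unfolding blocked_E_def by (auto simp: doubleton_eq_iff V2_not_Cp V3_not_Cp)

lemma overlap_sym: "overlap a b \<longleftrightarrow> overlap b a" unfolding overlap_def by auto

lemma three_chain:
  assumes "Ca \<subseteq> Cb" "Cb \<subseteq> Cc" "overlap Ca Fa" "\<not> overlap Cb Fa" "overlap Cc Fc" "\<not> overlap Cb Fc"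
    "overlap Fa Fc"
  shows False
proof -
  have "Fa \<subseteq> Cb" using assms(1,3,4) unfolding overlap_def by blast
  then show False using assms unfolding overlap_def by blast
qed

lemma six:
  assumes "\<not> overlap C1 C2" "\<not> overlap C1 C3" "\<not> overlap C2 C3"
    "w \<in> C1" "w \<in> C2" "w \<in> C3"
    "overlap C1 F1" "overlap C2 F2" "overlap C3 F3"
    "\<not> overlap C1 F2" "\<not> overlap C1 F3" "\<not> overlap C2 F1" "\<not> overlap C2 F3"
    "\<not> overlap C3 F1" "\<not> overlap C3 F2"
    "overlap F1 F2" "overlap F1 F3" "overlap F2 F3"
  shows False
proof -
  have c12: "C1 \<subseteq> C2 \<or> C2 \<subseteq> C1" using assms(1,4,5) unfolding overlap_def by blast
  have c13: "C1 \<subseteq> C3 \<or> C3 \<subseteq> C1" using assms(2,4,6) unfolding overlap_def by blast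
  have c23: "C2 \<subseteq> C3 \<or> C3 \<subseteq> C2" using assms(3,5,6) unfolding overlap_def by blast
  have s: "overlap F2 F1" "overlap F3 F1" "overlap F3 F2" using assms(16-18) overlap_sym by auto
  show False
  proof (cases "C1 \<subseteq> C2")
    case True
    show ?thesis
    proof (cases "C2 \<subseteq> C3")
      case True then show ?thesis using three_chain[of C1 C2 C3 F1 F3] \<open>C1 \<subseteq> C2\<close> assms by blast
    next
      case False
      then have "C3 \<subseteq> C2" using c23 by auto
      show ?thesis
      proof (cases "C1 \<subseteq> C3")
        case True then show ?thesis using three_chain[of C1 C3 C2 F1 F2] \<open>C3 \<subseteq> C2\<close> assms by blast
      next
        case False then have "C3 \<subseteq> C1" using c13 by auto
        then show ?thesis using three_chain[of C3 C1 C2 F3 F2] \<open>C1 \<subseteq> C2\<close> assms s by blast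
      qed
    qed
  next
    case False
    then have "C2 \<subseteq> C1" using c12 by auto
    show ?thesis
    proof (cases "C1 \<subseteq> C3")
      case True then show ?thesis using three_chain[of C2 C1 C3 F2 F3] \<open>C2 \<subseteq> C1\<close> assms by blast
    next
      case False
      then have "C3 \<subseteq> C1" using c13 by auto
      show ?thesis
      proof (cases "C2 \<subseteq> C3")
        case True then show ?thesis using three_chain[of C2 C3 C1 F2 F1] \<open>C3 \<subseteq> C1\<close> assms s by blast
      next
        case False then have "C3 \<subseteq> C2" using c23 by auto
        then show ?thesis using three_chain[of C3 C2 C1 F3 F1] \<open>C2 \<subseteq> C1\<close> assms s by blast
      qed
    qed
  qed
qed




context rtree begin

lemma adj_contra:
  assumes X: "subtree N F X" and Y: "subtree N F Y"
    and R: "subtree N F R" and rR: "r \<in> R" and rFu: "r \<in> Gu" and rFv: "r \<in> Gv"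
    and rX: "r \<notin> X" and rY: "r \<notin> Y"
    and lN: "l \<in> N" and aX: "\<forall>x\<in>X. anc x l" and aY: "\<forall>y\<in>Y. anc y l"
    and nXY: "\<not> overlap X Y" and oXR: "overlap X R" and oYR: "overlap Y R"
    and oXFu: "overlap X Gu" and nYFu: "\<not> overlap Y Gu"
    and oYFv: "overlap Y Gv" and nXFv: "\<not> overlap X Gv"
  shows False
proof -
  have c: "X \<inter> Y = {} \<or> X \<subseteq> Y \<or> Y \<subseteq> X" using nXY unfolding overlap_def by blast
  have n1: "\<not> X \<subseteq> Y"
  proof
    assume "X \<subseteq> Y"
    then have "overlap Y Gu" using oXFu rFu rY unfolding overlap_def by blast
    then show False using nYFu by simp
  qed
  have n2: "\<not> Y \<subseteq> X"
  proof
    assume "Y \<subseteq> X"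
    then have "overlap X Gv" using oYFv rFv rX unfolding overlap_def by blast
    then show False using nXFv by simp
  qed
  have disj: "X \<inter> Y = {}" using c n1 n2 by blast
  obtain x where x: "x \<in> X" "x \<in> R" using oXR unfolding overlap_def by blast
  obtain x' where x': "x' \<in> X" "x' \<notin> R" using oXR unfolding overlap_def by blast
  obtain y where y: "y \<in> Y" "y \<in> R" using oYR unfolding overlap_def by blast
  obtain y' where y': "y' \<in> Y" "y' \<notin> R" using oYR unfolding overlap_def by blast
  have ax: "anc x l" "anc x' l" "anc y l" "anc y' l" using aX aY x x' y y' by auto
  have h1: "anc x x'" using anc_total[OF lN ax(1,2)] root_closed[OF R rR x(2)] x' by auto
  have h2: "anc y y'" using anc_total[OF lN ax(3,4)] root_closed[OF R rR y(2)] y' by auto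
  have h3: "anc x y'" using anc_total[OF lN ax(1,4)] root_closed[OF R rR x(2)] y' by auto
  have h4: "anc y x'" using anc_total[OF lN ax(3,2)] root_closed[OF R rR y(2)] x' by auto
  from anc_total[OF lN ax(1,3)] show False
  proof
    assume "anc x y"
    then have "y \<in> X" using convex[OF X x(1) x'(1) h4] by simp
    then show False using disj y by auto
  next
    assume "anc y x"
    then have "x \<in> Y" using convex[OF Y y(1) y'(1) h3] by simp
    then show False using disj x by auto
  qed
qed

end




theorem lemma6:
  fixes V :: "'a set" and E :: "'a set set" and d :: nat
    and N :: "'n set" and F :: "'n set set"
  assumes "simple_graph V E"
    and "k_connected 3 V E"
    and "d \<ge> 3"
    and "is_tree N F"
    and "card (leaves N F) = d"
    and "\<forall>v\<in>N. \<not> (2 < degree F v \<and> degree F v < d)"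
    and "overlap_graph_of_subtrees (blocked_V d V E) (blocked_E d V E) N F"
  shows "colourable d V E"
proof -
  obtain S :: "'a bvert \<Rightarrow> 'n set" where Ssub: "\<forall>x\<in>blocked_V d V E. subtree N F (S x)"
    and Siff: "\<forall>x\<in>blocked_V d V E. \<forall>y\<in>blocked_V d V E. x \<noteq> y \<longrightarrow>
        ({x, y} \<in> blocked_E d V E \<longleftrightarrow> overlap (S x) (S y))"
    using assms(7) unfolding overlap_graph_of_subtrees_def by blast
  have Sov: "({x, y} \<in> blocked_E d V E \<longleftrightarrow> overlap (S x) (S y))"
    if "x \<in> blocked_V d V E" "y \<in> blocked_V d V E" "x \<noteq> y" for x y
    using Siff that by blast
  define K where "K = blocked_V2 E \<union> blocked_V3 V"
  have finV: "finite V" using assms(1) unfolding simple_graph_def by auto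
  have "V \<noteq> {}" using assms(2) unfolding k_connected_def by auto
  then obtain v0 where v0: "v0 \<in> V" by auto
  have Kne: "Fv 0 v0 \<in> K" unfolding K_def using M_Fv3[of 0 v0 V] v0 by auto
  have KS: "subtree N F (S x)" if "x \<in> K" for x
    using Ssub M_K that unfolding K_def by blast
  have "S (Fv 0 v0) \<noteq> {}" "S (Fv 0 v0) \<subseteq> N" using KS[OF Kne] unfolding subtree_def connected_graph_def by auto
  then obtain r0 where r0: "r0 \<in> N" by auto
  interpret T0: rtree N F r0 using assms(4) r0 by unfold_locales
  have "\<exists>z\<in>N. \<forall>x\<in>K. z \<in> S x"
  proof (rule T0.helly)
    show "\<forall>x\<in>K. subtree N F (S x)" using KS by auto
    show "K \<noteq> {}" using Kne by auto
    show "\<forall>x\<in>K. \<forall>y\<in>K. S x \<inter> S y \<noteq> {}"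
    proof (intro ballI)
      fix x y assume x: "x \<in> K" and y: "y \<in> K"
      show "S x \<inter> S y \<noteq> {}"
      proof (cases "x = y")
        case True then show ?thesis using T0.sub_ne[OF KS[OF x]] by auto
      next
        case False
        then have "{x, y} \<in> blocked_E d V E" using E_K x y unfolding K_def by blast
        moreover have "x \<in> blocked_V d V E" "y \<in> blocked_V d V E" using x y M_K unfolding K_def by auto
        ultimately have "overlap (S x) (S y)" using Sov False by blast
        then show ?thesis unfolding overlap_def by auto
      qed
    qed
  qed
  then obtain z where zN: "z \<in> N" and zK: "\<forall>x\<in>K. z \<in> S x" by blast
  interpret T: rtree N F z using assms(4) zN by unfold_locales
  obtain b where bb: "\<forall>x\<in>N. 3 \<le> degree F x \<longrightarrow> x = b"
  proof (cases "\<exists>x\<in>N. 3 \<le> degree F x")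
    case True
    then obtain b where "b \<in> N" "3 \<le> degree F b" by auto
    then show ?thesis using that T.branch_unique[OF assms(5,3,6)] by blast
  next
    case False then show ?thesis using that by auto
  qed
  define C where "C p = S (Cp (fst p) (snd p))" for p
  define G where "G p = S (Fv (fst p) (snd p))" for p
  define P where "P w = {p. fst p < 6 \<and> snd p \<in> V \<and> w \<in> C p}" for w
  have finP: "finite (P w)" for w
  proof -
    have "P w \<subseteq> {..<6} \<times> V" unfolding P_def by auto
    then show ?thesis using finV finite_subset by blast
  qed
  have pair: "\<not> overlap (C p) (C q) \<and> \<not> overlap (C p) (G q) \<and> overlap (G p) (G q)"
    if p: "fst p < 6" "snd p \<in> V" and q: "fst q < 6" "snd q \<in> V" and pq: "p \<noteq> q" for p q
  proof -
    have m: "Cp (fst p) (snd p) \<in> blocked_V d V E" "Cp (fst q) (snd q) \<in> blocked_V d V E"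
      "Fv (fst p) (snd p) \<in> blocked_V d V E" "Fv (fst q) (snd q) \<in> blocked_V d V E"
      using p q by (auto intro: M_Cp M_Fv)
    have ne: "Cp (fst p) (snd p) \<noteq> Cp (fst q) (snd q)" "Fv (fst p) (snd p) \<noteq> Fv (fst q) (snd q)"
      "Cp (fst p) (snd p) \<noteq> Fv (fst q) (snd q)"
      using pq by (auto simp: prod_eq_iff)
    have "{Cp (fst p) (snd p), Cp (fst q) (snd q)} \<notin> blocked_E d V E" by (rule NE_CpCp)
    then have "\<not> overlap (C p) (C q)" using Sov[OF m(1,2) ne(1)] unfolding C_def by simp
    moreover have "{Cp (fst p) (snd p), Fv (fst q) (snd q)} \<notin> blocked_E d V E"
    proof
      assume "{Cp (fst p) (snd p), Fv (fst q) (snd q)} \<in> blocked_E d V E"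
      then have "{Fv (fst q) (snd q), Cp (fst p) (snd p)} \<in> blocked_E d V E" by (simp add: insert_commute)
      then have "fst q = fst p \<and> snd q = snd p" by (rule NE_FvCp)
      then show False using pq by (simp add: prod_eq_iff)
    qed
    then have "\<not> overlap (C p) (G q)" using Sov[OF m(1,4) ne(3)] unfolding C_def G_def by simp
    moreover have "{Fv (fst p) (snd p), Fv (fst q) (snd q)} \<in> blocked_E d V E"
      using E_K[OF UnI2[OF M_Fv3[OF p]] UnI2[OF M_Fv3[OF q]] ne(2)] .
    then have "overlap (G p) (G q)" using Sov[OF m(3,4) ne(2)] unfolding G_def by simp
    ultimately show ?thesis by blast
  qed
  have self: "overlap (C p) (G p)" if p: "fst p < 6" "snd p \<in> V" for p
  proof -
    have e: "{Cp (fst p) (snd p), Fv (fst p) (snd p)} \<in> blocked_E d V E" by (rule E_CpFv[OF p])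
    have m1: "Cp (fst p) (snd p) \<in> blocked_V d V E" by (rule M_Cp[OF p])
    have m2: "Fv (fst p) (snd p) \<in> blocked_V d V E" by (rule M_Fv[OF p])
    have ne: "Cp (fst p) (snd p) \<noteq> Fv (fst p) (snd p)" by simp
    show ?thesis using Sov[OF m1 m2 ne] e unfolding C_def G_def by simp
  qed
  have cardP: "card (P w) \<le> 2" for w
  proof (rule ccontr)
    assume "\<not> card (P w) \<le> 2"
    then have "3 \<le> card (P w)" by auto
    then obtain T where T: "T \<subseteq> P w" "card T = 3" by (rule obtain_subset_with_card_n)
    then obtain p1 p2 p3 where p: "T = {p1, p2, p3}" "p1 \<noteq> p2" "p2 \<noteq> p3" "p1 \<noteq> p3"
      using T(2) unfolding card_3_iff by blast
    have inP: "p1 \<in> P w" "p2 \<in> P w" "p3 \<in> P w" using T p by auto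
    then have pp: "fst p1 < 6" "snd p1 \<in> V" "w \<in> C p1" "fst p2 < 6" "snd p2 \<in> V" "w \<in> C p2"
      "fst p3 < 6" "snd p3 \<in> V" "w \<in> C p3" unfolding P_def by auto
    show False
    proof (rule six[of "C p1" "C p2" "C p3" w "G p1" "G p2" "G p3"])
      show "\<not> overlap (C p1) (C p2)" "\<not> overlap (C p1) (C p3)" "\<not> overlap (C p2) (C p3)"
        "\<not> overlap (C p1) (G p2)" "\<not> overlap (C p1) (G p3)" "\<not> overlap (C p2) (G p1)"
        "\<not> overlap (C p2) (G p3)" "\<not> overlap (C p3) (G p1)" "\<not> overlap (C p3) (G p2)"
        "overlap (G p1) (G p2)" "overlap (G p1) (G p3)" "overlap (G p2) (G p3)"
        using pair[OF pp(1,2,4,5) p(2)] pair[OF pp(1,2,7,8) p(4)] pair[OF pp(4,5,7,8) p(3)]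
          pair[OF pp(4,5,1,2) p(2)[symmetric]] pair[OF pp(7,8,1,2) p(4)[symmetric]]
          pair[OF pp(7,8,4,5) p(3)[symmetric]] by auto
      show "overlap (C p1) (G p1)" "overlap (C p2) (G p2)" "overlap (C p3) (G p3)"
        using self pp by auto
    qed (use pp in auto)
  qed
  have "card (fst ` (P z \<union> P b)) \<le> 4"
  proof -
    have "card (fst ` (P z \<union> P b)) \<le> card (P z \<union> P b)" by (rule card_image_le) (use finP in auto)
    also have "\<dots> \<le> card (P z) + card (P b)" by (rule card_Un_le)
    finally show ?thesis using cardP[of z] cardP[of b] by auto
  qed
  then have "\<not> {..<6::nat} \<subseteq> fst ` (P z \<union> P b)"
    using card_mono[of "fst ` (P z \<union> P b)" "{..<6::nat}"] finP by auto
  then obtain i where i: "i < 6" "i \<notin> fst ` (P z \<union> P b)" by auto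
  have good: "z \<notin> S (Cp i v) \<and> b \<notin> S (Cp i v)" if v: "v \<in> V" for v
  proof -
    have "(i, v) \<notin> P z \<union> P b" using i(2) image_eqI[of i fst "(i, v)"] by auto
    then have "(i, v) \<notin> P z" "(i, v) \<notin> P b" by auto
    then show ?thesis using i v unfolding P_def C_def by auto
  qed
  have CpS: "subtree N F (S (Cp i v))" if "v \<in> V" for v
    using Ssub M_Cp[OF i(1) that, of d E] by blast
  have ex_l: "\<exists>l. l \<in> leaves N F \<and> (\<forall>x\<in>S (Cp i v). T.anc x l)" if v: "v \<in> V" for v
  proof -
    have "\<forall>w\<in>S (Cp i v). degree F w \<le> 2"
    proof
      fix w assume w: "w \<in> S (Cp i v)"
      then have "w \<in> N" using T.sub_N[OF CpS[OF v]] by auto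
      then show "degree F w \<le> 2" using bb good[OF v] w by (cases "3 \<le> degree F w") auto
    qed
    then show ?thesis using T.chain_leaf[OF CpS[OF v]] good[OF v] by blast
  qed
  define lf where "lf v = (SOME l. l \<in> leaves N F \<and> (\<forall>x\<in>S (Cp i v). T.anc x l))" for v
  have lf: "lf v \<in> leaves N F \<and> (\<forall>x\<in>S (Cp i v). T.anc x (lf v))" if "v \<in> V" for v
    unfolding lf_def using someI_ex[OF ex_l[OF that]] .
  have "finite (leaves N F)" using T.finN finite_subset[of "leaves N F" N] unfolding leaves_def by auto
  then obtain h where h: "bij_betw h (leaves N F) {0..<card (leaves N F)}"
    using ex_bij_betw_finite_nat by blast
  show ?thesis unfolding colourable_def
  proof (intro exI[of _ "\<lambda>v. h (lf v)"] conjI ballI impI)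
    fix v assume "v \<in> V"
    then have "h (lf v) \<in> {0..<card (leaves N F)}" using bij_betw_apply[OF h] lf by blast
    then show "h (lf v) < d" using assms(5) by auto
  next
    fix u v assume u: "u \<in> V" and v: "v \<in> V" and uv: "{u, v} \<in> E"
    show "h (lf u) \<noteq> h (lf v)"
    proof
      assume heq: "h (lf u) = h (lf v)"
      have "lf u = lf v" using inj_onD[OF bij_betw_imp_inj_on[OF h] heq] lf[OF u] lf[OF v] by blast
      have unv: "u \<noteq> v" using assms(1) uv unfolding simple_graph_def by (auto simp: doubleton_eq_iff)
      define e where "e = {(i, u), (i, v)}"
      have e: "e \<in> copy_edges E" unfolding e_def copy_edges_def using i uv by blast
      have mem: "Cp i u \<in> blocked_V d V E" "Cp i v \<in> blocked_V d V E" "ER e \<in> blocked_V d V E"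
        "Fv i u \<in> blocked_V d V E" "Fv i v \<in> blocked_V d V E"
        using M_K[OF UnI1[OF M_ER2[OF e]]] i u v by (auto intro: M_Cp M_Fv)
      have K3: "ER e \<in> K" "Fv i u \<in> K" "Fv i v \<in> K" unfolding K_def using M_ER2[OF e] M_Fv3[OF i(1) u] M_Fv3[OF i(1) v] by auto
      have lN: "lf u \<in> N" using lf[OF u] unfolding leaves_def by auto
      show False
      proof (rule T.adj_contra[of "S (Cp i u)" "S (Cp i v)" "S (ER e)" "S (Fv i u)" "S (Fv i v)" "lf u"])
        show "subtree N F (S (Cp i u))" "subtree N F (S (Cp i v))" using CpS u v by auto
        show "subtree N F (S (ER e))" using KS K3 by auto
        show "z \<in> S (ER e)" "z \<in> S (Fv i u)" "z \<in> S (Fv i v)" using zK K3 by auto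
        show "z \<notin> S (Cp i u)" "z \<notin> S (Cp i v)" using good u v by auto
        show "lf u \<in> N" by fact
        show "\<forall>x\<in>S (Cp i u). T.anc x (lf u)" "\<forall>y\<in>S (Cp i v). T.anc y (lf u)"
          using lf[OF u] lf[OF v] \<open>lf u = lf v\<close> by auto
        have "{Cp i u, Cp i v} \<notin> blocked_E d V E" by (rule NE_CpCp)
        then show "\<not> overlap (S (Cp i u)) (S (Cp i v))" using Sov[OF mem(1,2)] unv by auto
        show "overlap (S (Cp i u)) (S (ER e))" using Sov[OF mem(1,3)] E_CpER[OF i(1) u e] unfolding e_def by auto
        show "overlap (S (Cp i v)) (S (ER e))" using Sov[OF mem(2,3)] E_CpER[OF i(1) v e] unfolding e_def by auto
        show "overlap (S (Cp i u)) (S (Fv i u))" using Sov[OF mem(1,4)] E_CpFv[OF i(1) u] by auto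
        show "overlap (S (Cp i v)) (S (Fv i v))" using Sov[OF mem(2,5)] E_CpFv[OF i(1) v] by auto
        have "{Cp i v, Fv i u} \<notin> blocked_E d V E"
        proof
          assume "{Cp i v, Fv i u} \<in> blocked_E d V E"
          then have "{Fv i u, Cp i v} \<in> blocked_E d V E" by (simp add: insert_commute)
          then have "i = i \<and> u = v" by (rule NE_FvCp)
          then show False using unv by simp
        qed
        then show "\<not> overlap (S (Cp i v)) (S (Fv i u))" using Sov[OF mem(2,4)] by auto
        have "{Cp i u, Fv i v} \<notin> blocked_E d V E"
        proof
          assume "{Cp i u, Fv i v} \<in> blocked_E d V E"
          then have "{Fv i v, Cp i u} \<in> blocked_E d V E" by (simp add: insert_commute)
          then have "i = i \<and> v = u" by (rule NE_FvCp)
          then show False using unv by simp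
        qed
        then show "\<not> overlap (S (Cp i u)) (S (Fv i v))" using Sov[OF mem(1,5)] by auto
      qed
    qed
  qed
qed


end
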